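(* Assume CH. Let $\mathcal{I}$ be a $\sigma$-ideal on $\mathbb{R}$ satisfying the standing assumptions, and let $n\geq 1$ be an integer. Then there exists an $\mathcal{I}$-Luzin set $L\subseteq\mathbb{R}$ such that the $n$-fold Minkowski sum $\bigoplus^{n}L=\underbrace{L+\cdots+L}_{n}$ is an $\mathcal{I}$-Luzin set and $\bigoplus^{n+1}L=\mathbb{R}$.
   Context: Standing assumptions on $\mathcal{I}$: $\mathcal{I}$ is a $\sigma$-ideal of subsets of $\mathbb{R}$ such that $\mathbb{R}\notin\mathcal{I}$; $x+I\in\mathcal{I}$ and $xI\in\mathcal{I}$ for all $x\in\mathbb{R}$, $I\in\mathcal{I}$; every member of $\mathcal{I}$ is contained in a Borel member of $\mathcal{I}$; and for all Borel $A,B\notin\mathcal{I}$ the set $A-B$ has nonempty interior. A set $L\subseteq\mathbb{R}$ is $\mathcal{I}$-Luzin if $|L|=\mathfrak{c}$ and $L\cap I$ is countable for every $I\in\mathcal{I}$. Minkowski sum: $A+B=\{a+b:a\in A,b\in B\}$. *)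

theory Defs
  imports "HOL-Analysis.Analysis" "HOL-Library.Equipollence"
begin

definition CH :: bool where
  "CH \<longleftrightarrow> (\<forall>A :: real set. countable A \<or> A \<approx> (UNIV :: real set))"

definition sigma_ideal :: "real set set \<Rightarrow> bool" where
  "sigma_ideal \<I> \<longleftrightarrow>
     {} \<in> \<I> \<and>
     (\<forall>A B. A \<in> \<I> \<longrightarrow> B \<subseteq> A \<longrightarrow> B \<in> \<I>) \<and>
     (\<forall>F. countable F \<longrightarrow> F \<subseteq> \<I> \<longrightarrow> \<Union>F \<in> \<I>)"

definition standing_ideal :: "real set set \<Rightarrow> bool" where
  "standing_ideal \<I> \<longleftrightarrow>
     sigma_ideal \<I> \<and>
     (UNIV :: real set) \<notin> \<I> \<and>
     (\<forall>x. \<forall>I\<in>\<I>. (\<lambda>y. x + y) ` I \<in> \<I> \<and> (\<lambda>y. x * y) ` I \<in> \<I>) \<and>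
     (\<forall>I\<in>\<I>. \<exists>B. B \<in> sets borel \<and> B \<in> \<I> \<and> I \<subseteq> B) \<and>
     (\<forall>A B. A \<in> sets borel \<longrightarrow> B \<in> sets borel \<longrightarrow> A \<notin> \<I> \<longrightarrow> B \<notin> \<I> \<longrightarrow>
        interior {a - b | a b. a \<in> A \<and> b \<in> B} \<noteq> {})"

definition luzin :: "real set set \<Rightarrow> real set \<Rightarrow> bool" where
  "luzin \<I> L \<longleftrightarrow> L \<approx> (UNIV :: real set) \<and> (\<forall>I\<in>\<I>. countable (L \<inter> I))"

fun msum :: "nat \<Rightarrow> real set \<Rightarrow> real set" where
  "msum 0 L = {0}"
| "msum (Suc n) L = {a + b | a b. a \<in> L \<and> b \<in> msum n L}"

end

theory Submission
  imports Defs
begin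

datatype bcode = BEmpty | BBasic nat | BCompl bcode | BUnion "nat \<Rightarrow> bcode"

primrec binterp :: "(nat \<Rightarrow> real set) \<Rightarrow> bcode \<Rightarrow> real set" where
  "binterp b BEmpty = {}"
| "binterp b (BBasic k) = b k"
| "binterp b (BCompl t) = UNIV - binterp b t"
| "binterp b (BUnion f) = (\<Union>i. binterp b (f i))"

primrec bgraph :: "bcode \<Rightarrow> nat list \<Rightarrow> nat" where
  "bgraph BEmpty = (\<lambda>p. case p of [] \<Rightarrow> 1 | _ \<Rightarrow> 0)"
| "bgraph (BBasic k) = (\<lambda>p. case p of [] \<Rightarrow> k + 4 | _ \<Rightarrow> 0)"
| "bgraph (BCompl t) = (\<lambda>p. case p of [] \<Rightarrow> 2 | i # q \<Rightarrow> bgraph t q)"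
| "bgraph (BUnion f) = (\<lambda>p. case p of [] \<Rightarrow> 3 | i # q \<Rightarrow> bgraph (f i) q)"

lemma bgraph_inj: "bgraph t = bgraph t' \<Longrightarrow> t = t'"
proof (induction t arbitrary: t')
  case BEmpty
  then have "bgraph t' [] = 1" by (metis bgraph.simps(1) list.simps(4))
  then show ?case by (cases t') auto
next
  case (BBasic k)
  then have "bgraph t' [] = k + 4" by (metis bgraph.simps(2) list.simps(4))
  then show ?case using BBasic by (cases t') auto
next
  case (BCompl t)
  then have h: "bgraph t' [] = 2" by (metis bgraph.simps(3) list.simps(4))
  show ?case
  proof (cases t')
    case (BCompl u)
    have "bgraph t q = bgraph u q" for q
      using fun_cong[OF BCompl.prems, of "0 # q"] \<open>t' = BCompl u\<close> by simp
    then have "bgraph t = bgraph u" by (rule ext)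
    with BCompl.IH show ?thesis using \<open>t' = BCompl u\<close> by simp
  qed (use h in auto)
next
  case (BUnion f)
  then have h: "bgraph t' [] = 3" by (metis bgraph.simps(4) list.simps(4))
  show ?case
  proof (cases t')
    case (BUnion g)
    have "f i = g i" for i
    proof -
      have "bgraph (f i) q = bgraph (g i) q" for q
        using fun_cong[OF BUnion.prems, of "i # q"] \<open>t' = BUnion g\<close> by simp
      then have "bgraph (f i) = bgraph (g i)" by (rule ext)
      then show ?thesis using BUnion.IH by blast
    qed
    then show ?thesis using \<open>t' = BUnion g\<close> by auto
  qed (use h in auto)
qed

lemma borel_lepoll_real: "sets (borel :: real measure) \<lesssim> (UNIV :: real set)"
proof -
  obtain B :: "real set set" where B: "countable B" "topological_basis B"
    using ex_countable_basis by blast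
  have Bne: "B \<noteq> {}"
  proof
    assume "B = {}"
    moreover obtain B' where "B' \<subseteq> B" "\<Union>B' = (UNIV::real set)"
      using B(2) unfolding topological_basis_def by (meson open_UNIV)
    ultimately show False by auto
  qed
  define b where "b = from_nat_into B"
  have rb: "range b = B" unfolding b_def using B(1) Bne by (simp add: range_from_nat_into)
  have sb: "sets (borel :: real measure) = sigma_sets UNIV B"
    by (subst borel_eq_countable_basis[OF B]) (simp add: sets_measure_of)
  have cov: "X \<in> range (binterp b)" if "X \<in> sigma_sets UNIV B" for X
    using that
  proof induction
    case (Basic a) then obtain k where "a = b k" using rb by auto
    then show ?case by (metis binterp.simps(2) rangeI)
  next
    case Empty then show ?case by (metis binterp.simps(1) rangeI)
  next
    case (Compl a) then obtain t where "a = binterp b t" by auto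
    then show ?case by (metis binterp.simps(3) rangeI)
  next
    case (Union A)
    then have "\<forall>i. \<exists>t. A i = binterp b t" by (metis imageE)
    then obtain f where "\<And>i. A i = binterp b (f i)" by metis
    then have "(\<Union>i. A i) = binterp b (BUnion f)" by simp
    then show ?case by (metis rangeI)
  qed
  define enc where "enc X = to_nat ` {(p, bgraph (SOME t. X = binterp b t) p) | p. True}" for X
  have "inj_on enc (sets (borel :: real measure))"
  proof (rule inj_onI)
    fix X Y assume X: "X \<in> sets (borel :: real measure)" and Y: "Y \<in> sets (borel :: real measure)" and e: "enc X = enc Y"
    let ?tX = "SOME t. X = binterp b t" and ?tY = "SOME t. Y = binterp b t"
    have hX: "X = binterp b ?tX"
    proof -
      obtain t where "X = binterp b t" using cov[of X] X sb by auto
      then show ?thesis by (rule someI)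
    qed
    have hY: "Y = binterp b ?tY"
    proof -
      obtain t where "Y = binterp b t" using cov[of Y] Y sb by auto
      then show ?thesis by (rule someI)
    qed
    have "{(p, bgraph ?tX p) | p. True} = {(p, bgraph ?tY p) | p. True}"
      using e unfolding enc_def by (simp add: inj_image_eq_iff)
    then have "bgraph ?tX = bgraph ?tY"
      by (intro ext) blast
    then have "?tX = ?tY" by (rule bgraph_inj)
    then show "X = Y" using hX hY by simp
  qed
  then have "sets (borel :: real measure) \<lesssim> (UNIV :: nat set set)"
    unfolding lepoll_def by blast
  also have "\<dots> \<approx> (UNIV :: real set)" by (rule nat_sets_eqpoll_reals)
  finally show ?thesis .
qed

lemma omega1_order:
  assumes ch: CH
  shows "\<exists>R :: (real \<times> real) set. wf R \<and> trans R \<and> (\<forall>x y. x \<noteq> y \<longrightarrow> (x,y)\<in>R \<or> (y,x)\<in>R)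
            \<and> (\<forall>x. countable {y. (y,x)\<in>R})"
proof -
  obtain W :: "real rel" where W: "Well_order W" "Field W = UNIV"
    using well_ordering[where 'a=real] by auto
  have "trans W" "antisym W" "Total W" "wf (W - Id)"
    using W(1) by (simp_all add: order_on_defs)
  define S where "S = W - Id"
  have wfS: "wf S" using \<open>wf (W - Id)\<close> S_def by simp
  have trS: "trans S" unfolding S_def by (rule trans_diff_Id[OF \<open>trans W\<close> \<open>antisym W\<close>])
  have totS: "\<forall>x y. x \<noteq> y \<longrightarrow> (x,y)\<in>S \<or> (y,x)\<in>S"
    using \<open>Total W\<close> W(2) unfolding S_def total_on_def by auto
  define U where "U = {x. \<not> countable {y. (y,x)\<in>S}}"
  show ?thesis
  proof (cases "U = {}")
    case True
    then show ?thesis using wfS trS totS unfolding U_def by blast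
  next
    case False
    then obtain u where u: "u \<in> U" by blast
    obtain x0 where x0: "x0 \<in> U" "\<And>y. (y, x0) \<in> S \<Longrightarrow> y \<notin> U"
      using wfE_min[OF wfS u] by blast
    define J where "J = {y. (y,x0)\<in>S}"
    have "\<not> countable J" using x0(1) unfolding U_def J_def by simp
    then have "J \<approx> (UNIV :: real set)" using ch unfolding CH_def by blast
    then obtain h where h: "bij_betw h (UNIV :: real set) J"
      by (meson eqpoll_def eqpoll_sym)
    define R where "R = inv_image S h"
    have "wf R" unfolding R_def by (rule wf_inv_image[OF wfS])
    moreover have "trans R" unfolding R_def using trS by (rule trans_inv_image)
    moreover have "\<forall>x y. x \<noteq> y \<longrightarrow> (x,y)\<in>R \<or> (y,x)\<in>R"
    proof (intro allI impI)
      fix x y :: real assume "x \<noteq> y"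
      then have "h x \<noteq> h y" using h by (metis bij_betw_imp_inj_on inj_on_def UNIV_I)
      then show "(x,y)\<in>R \<or> (y,x)\<in>R" using totS unfolding R_def by simp
    qed
    moreover have "\<forall>x. countable {y. (y,x)\<in>R}"
    proof
      fix x
      have "h x \<in> J" using h by (meson UNIV_I bij_betwE)
      then have "h x \<notin> U" using x0(2) unfolding J_def by simp
      then have c: "countable {y. (y, h x)\<in>S}" unfolding U_def by simp
      have "h ` {y. (y,x)\<in>R} \<subseteq> {y. (y, h x)\<in>S}" unfolding R_def by auto
      then have "countable (h ` {y. (y,x)\<in>R})" using c countable_subset by blast
      moreover have "inj_on h {y. (y,x)\<in>R}"
        using h by (metis bij_betw_imp_inj_on inj_on_subset subset_UNIV)
      ultimately show "countable {y. (y,x)\<in>R}" by (rule countable_image_inj_on)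
    qed
    ultimately show ?thesis by blast
  qed
qed

lemma si_sigma: "standing_ideal \<I> \<Longrightarrow> sigma_ideal \<I>"
  unfolding standing_ideal_def by (elim conjE)
lemma si_union: "standing_ideal \<I> \<Longrightarrow> countable F \<Longrightarrow> F \<subseteq> \<I> \<Longrightarrow> \<Union>F \<in> \<I>"
  using si_sigma unfolding sigma_ideal_def by blast
lemma si_sub: "standing_ideal \<I> \<Longrightarrow> A \<in> \<I> \<Longrightarrow> B \<subseteq> A \<Longrightarrow> B \<in> \<I>"
  using si_sigma unfolding sigma_ideal_def by blast
lemma si_empty: "standing_ideal \<I> \<Longrightarrow> {} \<in> \<I>"
  using si_sigma unfolding sigma_ideal_def by blast
lemma si_UNIV: "standing_ideal \<I> \<Longrightarrow> UNIV \<notin> \<I>"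
  unfolding standing_ideal_def by (elim conjE)
lemma si_inv: "standing_ideal \<I> \<Longrightarrow> (\<forall>x. \<forall>I\<in>\<I>. (\<lambda>y. x + y) ` I \<in> \<I> \<and> (\<lambda>y. x * y) ` I \<in> \<I>)"
  unfolding standing_ideal_def by (elim conjE)
lemma si_add: "standing_ideal \<I> \<Longrightarrow> I \<in> \<I> \<Longrightarrow> (\<lambda>y. x + y) ` I \<in> \<I>"
  using si_inv by blast
lemma si_mult: "standing_ideal \<I> \<Longrightarrow> I \<in> \<I> \<Longrightarrow> (\<lambda>y. x * y) ` I \<in> \<I>"
  using si_inv by blast
lemma si_borel0: "standing_ideal \<I> \<Longrightarrow> (\<forall>I\<in>\<I>. \<exists>B. B \<in> sets borel \<and> B \<in> \<I> \<and> I \<subseteq> B)"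
  unfolding standing_ideal_def by (elim conjE)
lemma si_borel: "standing_ideal \<I> \<Longrightarrow> I \<in> \<I> \<Longrightarrow> \<exists>B. B \<in> sets borel \<and> B \<in> \<I> \<and> I \<subseteq> B"
  using si_borel0 by blast

lemma step_choice:
  assumes si: "standing_ideal \<I>" and H: "countable H" and C: "C \<in> \<I>"
  shows "\<exists>b::real. \<forall>c::int. c \<noteq> 0 \<longrightarrow> (\<forall>h\<in>H. h + of_int c * b \<notin> C)"
proof -
  define G where "G = (\<lambda>(c::int, h::real). (\<lambda>y. (1 / of_int c) * y) ` ((\<lambda>y. - h + y) ` C))"
  define E where "E = \<Union> (G ` ((UNIV - {0}) \<times> H))"
  have "countable ((UNIV - {0::int}) \<times> H)" using H by auto
  moreover have "G ` ((UNIV - {0}) \<times> H) \<subseteq> \<I>"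
  proof -
    have "G (c, h) \<in> \<I>" for c h
      unfolding G_def case_prod_conv by (rule si_mult[OF si si_add[OF si C]])
    then show ?thesis by blast
  qed
  ultimately have "E \<in> \<I>" unfolding E_def by (intro si_union[OF si] countable_image)
  have "E \<noteq> UNIV"
  proof
    assume "E = UNIV"
    with \<open>E \<in> \<I>\<close> si_UNIV[OF si] show False by simp
  qed
  then obtain b where b: "b \<notin> E" by auto
  show ?thesis
  proof (intro exI allI impI ballI)
    fix c :: int and h assume c: "c \<noteq> 0" and h: "h \<in> H"
    show "h + of_int c * b \<notin> C"
    proof
      assume hc: "h + of_int c * b \<in> C"
      have "b = (1 / of_int c) * (- h + (h + of_int c * b))" using c by simp
      then have "b \<in> G (c, h)" unfolding G_def using hc by blast
      then show False using b c h unfolding E_def by blast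
    qed
  qed
qed

lemma indep_choice:
  assumes si: "standing_ideal \<I>" and C: "C \<in> \<I>"
  shows "countable H \<Longrightarrow> \<exists>a::nat \<Rightarrow> real. \<forall>k::nat \<Rightarrow> int. (\<exists>i<j. k i \<noteq> 0) \<longrightarrow>
            (\<forall>h\<in>H. h + (\<Sum>i<j. of_int (k i) * a i) \<notin> C)"
proof (induction j arbitrary: H)
  case 0
  show ?case by simp
next
  case (Suc j)
  from step_choice[OF si Suc.prems C] obtain b where
    b0: "\<forall>c::int. c \<noteq> 0 \<longrightarrow> (\<forall>h\<in>H. h + of_int c * b \<notin> C)" ..
  have b: "\<And>c h. c \<noteq> 0 \<Longrightarrow> h \<in> H \<Longrightarrow> h + of_int c * b \<notin> C" using b0 by blast
  define H2 where "H2 = (\<lambda>(h, c::int). h + of_int c * b) ` (H \<times> UNIV)"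
  have "countable (H \<times> (UNIV::int set))" using Suc.prems by simp
  then have "countable H2" unfolding H2_def by (rule countable_image)
  from Suc.IH[OF this] obtain a where
    a0: "\<forall>k::nat\<Rightarrow>int. (\<exists>i<j. k i \<noteq> 0) \<longrightarrow> (\<forall>h\<in>H2. h + (\<Sum>i<j. of_int (k i) * a i) \<notin> C)" ..
  have a: "\<And>k h. (\<exists>i<j. k i \<noteq> 0) \<Longrightarrow> h \<in> H2 \<Longrightarrow> h + (\<Sum>i<j. of_int (k i) * a i) \<notin> C"
    using a0 by blast
  define a' where "a' = case_nat b a"
  show ?case
  proof (intro exI allI impI ballI)
    fix k :: "nat \<Rightarrow> int" and h assume k: "\<exists>i<Suc j. k i \<noteq> 0" and h: "h \<in> H"
    have eq: "(\<Sum>i<Suc j. of_int (k i) * a' i) = of_int (k 0) * b + (\<Sum>i<j. of_int (k (Suc i)) * a i)"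
      unfolding a'_def by (subst sum.lessThan_Suc_shift) simp
    show "h + (\<Sum>i<Suc j. of_int (k i) * a' i) \<notin> C"
    proof (cases "\<exists>i<j. k (Suc i) \<noteq> 0")
      case True
      have "h + of_int (k 0) * b \<in> H2" unfolding H2_def using h by force
      from a[OF True this] show ?thesis unfolding eq by (simp add: add.assoc)
    next
      case False
      then have z: "(\<Sum>i<j. of_int (k (Suc i)) * a i) = (0::real)" by simp
      have "k 0 \<noteq> 0" using k False by (metis less_Suc_eq_0_disj)
      from b[OF this h] show ?thesis unfolding eq z by simp
    qed
  qed
qed

lemma msum_mono: "A \<subseteq> B \<Longrightarrow> msum m A \<subseteq> msum m B"
  by (induction m) auto

lemma msum_Suc_image: "msum (Suc m) A = (\<lambda>(a,b). a + b) ` (A \<times> msum m A)"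
  by auto

lemma countable_msum: "countable A \<Longrightarrow> countable (msum m A)"
  by (induction m) (auto simp: msum_Suc_image simp del: msum.simps(2))

lemma sum_in_msum: "(\<And>i. i < m \<Longrightarrow> a i \<in> A) \<Longrightarrow> (\<Sum>i<m. a i) \<in> msum m A"
proof (induction m)
  case 0 then show ?case by simp
next
  case (Suc m)
  have "(\<Sum>i<Suc m. a i) = a m + (\<Sum>i<m. a i)" by simp
  moreover have "(\<Sum>i<m. a i) \<in> msum m A" using Suc by simp
  moreover have "a m \<in> A" using Suc.prems by simp
  ultimately show ?case using msum.simps(2)[of m A] by blast
qed

lemma msum_directed:
  assumes dir: "\<And>x y. x \<in> J \<Longrightarrow> y \<in> J \<Longrightarrow> \<exists>z\<in>J. S x \<subseteq> S z \<and> S y \<subseteq> S z"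
  shows "msum (Suc m) (\<Union> (S ` J)) \<subseteq> (\<Union>z\<in>J. msum (Suc m) (S z))"
proof (induction m)
  case 0 then show ?case by auto
next
  case (Suc m)
  show ?case
  proof
    fix s assume "s \<in> msum (Suc (Suc m)) (\<Union> (S ` J))"
    then obtain a b where s: "s = a + b" and a: "a \<in> \<Union> (S ` J)" and b: "b \<in> msum (Suc m) (\<Union> (S ` J))"
      using msum.simps(2)[of "Suc m" "\<Union> (S ` J)"] by blast
    obtain x where x: "x \<in> J" "a \<in> S x" using a by auto
    obtain y where y: "y \<in> J" "b \<in> msum (Suc m) (S y)" using subsetD[OF Suc.IH b] by blast
    obtain z where z: "z \<in> J" "S x \<subseteq> S z" "S y \<subseteq> S z" using dir[OF x(1) y(1)] by blast
    have "b \<in> msum (Suc m) (S z)" using msum_mono[OF z(3)] y(2) by blast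
    then have "s \<in> msum (Suc (Suc m)) (S z)" using s x(2) z(2) msum.simps(2)[of "Suc m" "S z"] by blast
    then show "s \<in> (\<Union>z\<in>J. msum (Suc (Suc m)) (S z))" using z(1) by blast
  qed
qed

lemma msum_rep:
  fixes a' :: "nat \<Rightarrow> real"
  shows "s \<in> msum m (P \<union> a' ` {..n}) \<Longrightarrow> \<exists>p k. (\<exists>m'. p \<in> msum m' P) \<and>
     s = p + (\<Sum>i\<le>n. real (k i) * a' i) \<and> sum k {..n} \<le> m \<and> (sum k {..n} = 0 \<longrightarrow> s \<in> msum m P)"
proof (induction m arbitrary: s)
  case 0
  then have "s = 0" by simp
  then show ?case
    by (intro exI[of _ "0"] exI[of _ "\<lambda>_. 0"] conjI exI[of _ "0"]) simp_all
next
  case (Suc m)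
  from Suc.prems obtain u v where s: "s = u + v" and u: "u \<in> P \<union> a' ` {..n}"
    and v: "v \<in> msum m (P \<union> a' ` {..n})"
    using msum.simps(2)[of m "P \<union> a' ` {..n}"] by blast
  obtain p k where pk: "(\<exists>m'. p \<in> msum m' P) \<and> v = p + (\<Sum>i\<le>n. real (k i) * a' i) \<and> sum k {..n} \<le> m \<and>
    (sum k {..n} = 0 \<longrightarrow> v \<in> msum m P)"
    using Suc.IH[OF v] by (elim exE) (rule that)
  from pk have p0: "\<exists>m'. p \<in> msum m' P" by (rule conjunct1)
  from pk have v_eq: "v = p + (\<Sum>i\<le>n. real (k i) * a' i)" by (rule conjunct1[OF conjunct2])
  from pk have sk: "sum k {..n} \<le> m" by (rule conjunct1[OF conjunct2[OF conjunct2]])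
  from pk have sk0: "sum k {..n} = 0 \<longrightarrow> v \<in> msum m P" by (rule conjunct2[OF conjunct2[OF conjunct2]])
  from p0 obtain m' where p: "p \<in> msum m' P" ..
  show ?case
  proof (cases "u \<in> P")
    case True
    have p': "u + p \<in> msum (Suc m') P" using True p msum.simps(2)[of m' P] by blast
    have "s = (u + p) + (\<Sum>i\<le>n. real (k i) * a' i)" using s v_eq by simp
    moreover have "sum k {..n} = 0 \<longrightarrow> s \<in> msum (Suc m) P"
      using sk0 s True msum.simps(2)[of m P] by blast
    ultimately show ?thesis using p' sk by (intro exI[of _ "u + p"] exI[of _ k] conjI exI[of _ "Suc m'"]) simp_all
  next
    case False
    then obtain j where j: "j \<le> n" "u = a' j" using u by blast
    define k' where "k' = (\<lambda>i. k i + (if i = j then 1 else 0))"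
    have s1: "sum k' {..n} = sum k {..n} + 1"
      unfolding k'_def using j(1) by (simp add: sum.distrib)
    have s2: "(\<Sum>i\<le>n. real (k' i) * a' i) = (\<Sum>i\<le>n. real (k i) * a' i) + a' j"
    proof -
      have "(\<Sum>i\<le>n. real (k' i) * a' i) = (\<Sum>i\<le>n. real (k i) * a' i + (if i = j then a' i else 0))"
        unfolding k'_def by (intro sum.cong) (auto simp: distrib_right)
      also have "\<dots> = (\<Sum>i\<le>n. real (k i) * a' i) + (\<Sum>i\<le>n. (if i = j then a' i else 0))"
        by (rule sum.distrib)
      also have "(\<Sum>i\<le>n. (if i = j then a' i else 0)) = a' j"
        using j(1) by (simp add: sum.delta)
      finally show ?thesis .
    qed
    have "s = p + (\<Sum>i\<le>n. real (k' i) * a' i)" using s v_eq j(2) s2 by simp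
    then show ?thesis using p s1 sk
      by (intro exI[of _ p] exI[of _ k'] conjI exI[of _ m']) simp_all
  qed
qed

lemma countable_Psum: "countable P \<Longrightarrow> countable (\<Union>m. msum m P)"
  by (rule countable_UN) (simp_all add: countable_msum)

lemma stage_choice:
  fixes x :: real
  assumes si: "standing_ideal \<I>" and P: "countable P" and C: "C \<in> \<I>" and n: "n \<ge> 1"
  shows "\<exists>a'::nat \<Rightarrow> real. (\<Sum>i\<le>n. a' i) = x \<and> (\<forall>i\<le>n. a' i \<notin> C) \<and>
           (\<forall>s \<in> msum n (P \<union> a' ` {..n}). s \<notin> msum n P \<longrightarrow> s \<notin> C)"
proof -
  define Ps where "Ps = (\<Union>m. msum m P)"
  define H where "H = (\<lambda>(p, c::int). p + of_int c * x) ` (Ps \<times> UNIV)"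
  have "countable (Ps \<times> (UNIV :: int set))" using countable_Psum[OF P] Ps_def by simp
  then have cH: "countable H" unfolding H_def by (rule countable_image)
  have inH: "p + of_int c * x \<in> H" if "p \<in> msum m P" for p c m
    unfolding H_def Ps_def using that by force
  from indep_choice[OF si C cH, of n] obtain a where
    a0: "\<forall>k::nat\<Rightarrow>int. (\<exists>i<n. k i \<noteq> 0) \<longrightarrow> (\<forall>h\<in>H. h + (\<Sum>i<n. of_int (k i) * a i) \<notin> C)" ..
  have a: "\<And>k h. (\<exists>i<n. k i \<noteq> 0) \<Longrightarrow> h \<in> H \<Longrightarrow> h + (\<Sum>i<n. of_int (k i) * a i) \<notin> C"
    using a0 by blast
  define a' where "a' = (\<lambda>i. if i < n then a i else x - (\<Sum>i<n. a i))"
  have split: "(\<Sum>i\<le>n. f i) = (\<Sum>i<n. f i) + f n" for f :: "nat \<Rightarrow> real"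
    by (simp add: lessThan_Suc_atMost[symmetric])
  have sumx: "(\<Sum>i\<le>n. a' i) = x"
    unfolding split a'_def by simp
  have h0: "0 \<in> H" using inH[of 0 0 0] by simp
  have hx: "x \<in> H" using inH[of 0 0 1] by simp
  have notC: "\<forall>i\<le>n. a' i \<notin> C"
  proof (intro allI impI)
    fix i assume "i \<le> n"
    show "a' i \<notin> C"
    proof (cases "i < n")
      case True
      have "0 + (\<Sum>l<n. of_int (if l = i then 1 else 0) * a l) \<notin> C"
        by (rule a[OF _ h0]) (use True in auto)
      moreover have "(\<Sum>l<n. of_int (if l = i then 1 else 0) * a l) = (\<Sum>l<n. if l = i then a l else 0)"
        by (rule sum.cong) auto
      moreover have "(\<Sum>l<n. if l = i then a l else 0) = a i"
        using True by (simp add: sum.delta)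
      ultimately show ?thesis using True unfolding a'_def by simp
    next
      case False
      have "x + (\<Sum>l<n. of_int (-1) * a l) \<notin> C"
      proof (rule a[OF _ hx])
        show "\<exists>i<n. (- 1::int) \<noteq> 0" using n by (intro exI[of _ 0]) simp
      qed
      moreover have "(\<Sum>l<n. of_int (-1) * a l) = - (\<Sum>l<n. a l)"
        by (simp add: sum_negf)
      ultimately show ?thesis using False unfolding a'_def by simp
    qed
  qed
  have sums: "\<forall>s \<in> msum n (P \<union> a' ` {..n}). s \<notin> msum n P \<longrightarrow> s \<notin> C"
  proof (intro ballI impI)
    fix s assume s: "s \<in> msum n (P \<union> a' ` {..n})" and sP: "s \<notin> msum n P"
    obtain p k where pk: "(\<exists>m'. p \<in> msum m' P) \<and> s = p + (\<Sum>i\<le>n. real (k i) * a' i) \<and> sum k {..n} \<le> n \<and>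
      (sum k {..n} = 0 \<longrightarrow> s \<in> msum n P)"
      using msum_rep[OF s] by (elim exE) (rule that)
    from pk have p0: "\<exists>m'. p \<in> msum m' P" by (rule conjunct1)
    from pk have s_eq: "s = p + (\<Sum>i\<le>n. real (k i) * a' i)" by (rule conjunct1[OF conjunct2])
    from pk have sk: "sum k {..n} \<le> n" by (rule conjunct1[OF conjunct2[OF conjunct2]])
    from pk have sk0: "sum k {..n} = 0 \<longrightarrow> s \<in> msum n P" by (rule conjunct2[OF conjunct2[OF conjunct2]])
    from p0 obtain m' where p: "p \<in> msum m' P" ..
    define K where "K = (\<lambda>i. int (k i) - int (k n))"
    have Kne: "\<exists>i<n. K i \<noteq> 0"
    proof (rule ccontr)
      assume nK: "\<not> (\<exists>i<n. K i \<noteq> 0)"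
      have eq: "k i = k n" if "i \<le> n" for i
      proof (cases "i < n")
        case True
        then have "K i = 0" using nK by blast
        then show ?thesis unfolding K_def by simp
      next
        case False
        then show ?thesis using that by simp
      qed
      have "sum k {..n} = sum (\<lambda>_. k n) {..n}" by (rule sum.cong[OF refl], rule eq, simp)
      also have "\<dots> = Suc n * k n" by simp
      finally have sumeq: "sum k {..n} = Suc n * k n" .
      have "k n = 0"
      proof (rule ccontr)
        assume "k n \<noteq> 0"
        then have "1 \<le> k n" by simp
        then have "Suc n * 1 \<le> Suc n * k n" by (rule mult_le_mono2)
        then show False using sk sumeq by simp
      qed
      then have "sum k {..n} = 0" using sumeq by simp
      then show False using sk0 sP by simp
    qed
    have hH: "p + of_int (int (k n)) * x \<in> H" by (rule inH[OF p])
    have "(\<Sum>i\<le>n. real (k i) * a' i) = (\<Sum>i<n. real (k i) * a i) + real (k n) * (x - (\<Sum>i<n. a i))"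
      unfolding split a'_def by simp
    also have "\<dots> = of_int (int (k n)) * x + (\<Sum>i<n. of_int (K i) * a i)"
      unfolding K_def by (simp add: algebra_simps sum_distrib_left sum_subtractf)
    finally have "s = (p + of_int (int (k n)) * x) + (\<Sum>i<n. of_int (K i) * a i)"
      using s_eq by simp
    then show "s \<notin> C" using a[OF Kne hH] by simp
  qed
  show ?thesis using sumx notC sums by blast
qed

lemma borel_enum:
  assumes si: "standing_ideal \<I>"
  shows "\<exists>Bn :: real \<Rightarrow> real set. (\<forall>y. Bn y \<in> \<I>) \<and>
           (\<forall>B. B \<in> sets borel \<longrightarrow> B \<in> \<I> \<longrightarrow> (\<exists>y. B = Bn y))"
proof -
  obtain f :: "real set \<Rightarrow> real" where f: "inj_on f (sets (borel :: real measure))"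
    using borel_lepoll_real unfolding lepoll_def by blast
  define BI where "BI = {B. B \<in> sets (borel :: real measure) \<and> B \<in> \<I>}"
  have fi: "inj_on f BI" using f unfolding BI_def by (rule inj_on_subset) auto
  define Bn where "Bn y = (if y \<in> f ` BI then the_inv_into BI f y else {})" for y
  have "Bn y \<in> \<I>" for y
  proof (cases "y \<in> f ` BI")
    case True
    then have "the_inv_into BI f y \<in> BI" by (rule the_inv_into_into[OF fi]) simp
    then show ?thesis using True unfolding Bn_def BI_def by simp
  next
    case False
    then show ?thesis unfolding Bn_def using si_empty[OF si] by simp
  qed
  moreover have "\<exists>y. B = Bn y" if "B \<in> sets borel" "B \<in> \<I>" for B
  proof -
    have B: "B \<in> BI" using that unfolding BI_def by simp
    have "Bn (f B) = B" unfolding Bn_def using B the_inv_into_f_f[OF fi B] by simp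
    then show ?thesis by metis
  qed
  ultimately show ?thesis by blast
qed

lemma msum_shift_mem:
  assumes "l \<in> L" "a0 \<in> L"
  shows "l + real m * a0 \<in> msum (Suc m) L"
proof (induction m)
  case 0 then show ?case using assms(1) by simp
next
  case (Suc m)
  have "l + real (Suc m) * a0 = a0 + (l + real m * a0)" by (simp add: algebra_simps)
  then show ?case using Suc assms(2) msum.simps(2)[of "Suc m" L] by blast
qed

theorem mainTheorem15:
  fixes \<I> :: "real set set" and n :: nat
  assumes "CH"
    and "standing_ideal \<I>"
    and "n \<ge> 1"
  shows "\<exists>L :: real set. luzin \<I> L \<and> luzin \<I> (msum n L) \<and> msum (Suc n) L = UNIV"
proof -
  note ch = assms(1) and si = assms(2) and n1 = assms(3)
  obtain m where nm: "n = Suc m" using n1 by (cases n) auto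
  obtain R :: "(real \<times> real) set" where wfR: "wf R" and trR: "trans R"
    and totR: "\<And>x y. x \<noteq> y \<Longrightarrow> (x,y)\<in>R \<or> (y,x)\<in>R" and cR: "\<And>x. countable {y. (y,x)\<in>R}"
    using omega1_order[OF ch] by blast
  obtain Bn :: "real \<Rightarrow> real set" where BnI: "\<And>y. Bn y \<in> \<I>"
    and Bnsurj: "\<And>B. B \<in> sets borel \<Longrightarrow> B \<in> \<I> \<Longrightarrow> \<exists>y. B = Bn y"
    using borel_enum[OF si] by blast
  define Cs where "Cs y = \<Union> (Bn ` ({z. (z,y)\<in>R} \<union> {y}))" for y
  have CsI: "Cs y \<in> \<I>" for y
  proof -
    have "countable ({z. (z,y)\<in>R} \<union> {y})" using cR[of y] by simp
    then have "countable (Bn ` ({z. (z,y)\<in>R} \<union> {y}))" by (rule countable_image)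
    moreover have "Bn ` ({z. (z,y)\<in>R} \<union> {y}) \<subseteq> \<I>" using BnI by blast
    ultimately show ?thesis unfolding Cs_def by (rule si_union[OF si])
  qed
  have BnCs: "Bn y \<subseteq> Cs x" if "y = x \<or> (y,x)\<in>R" for x y
    unfolding Cs_def using that by blast
  define good where "good P x a \<longleftrightarrow> (\<Sum>i\<le>n. a i) = x \<and> (\<forall>i\<le>n. a i \<notin> Cs x) \<and>
           (\<forall>s \<in> msum n (P \<union> a ` {..n}). s \<notin> msum n P \<longrightarrow> s \<notin> Cs x)" for P x and a :: "nat \<Rightarrow> real"
  define Hf where "Hf g x = (SOME a. good (\<Union>z\<in>{z. (z,x)\<in>R}. g z ` {..n}) x a)"
    for g :: "real \<Rightarrow> nat \<Rightarrow> real" and x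
  define F where "F = wfrec R Hf"
  define Q where "Q x = (\<Union>z\<in>{z. (z,x)\<in>R}. F z ` {..n})" for x
  have cQ: "countable (Q x)" for x
    unfolding Q_def by (rule countable_UN[OF cR]) simp
  have FQ: "F x = (SOME a. good (Q x) x a)" for x
  proof -
    have "F x = Hf (cut F R x) x" unfolding F_def by (rule wfrec[OF wfR])
    also have "(\<Union>z\<in>{z. (z,x)\<in>R}. cut F R x z ` {..n}) = Q x"
      unfolding Q_def by (intro SUP_cong refl) (simp add: cut_apply)
    ultimately show ?thesis unfolding Hf_def by simp
  qed
  have Fgood: "good (Q x) x (F x)" for x
  proof -
    have "\<exists>a. good (Q x) x a"
      unfolding good_def by (rule stage_choice[OF si cQ[of x] CsI[of x] n1])
    then show ?thesis unfolding FQ by (rule someI_ex)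
  qed
  define Pl where "Pl x = Q x \<union> F x ` {..n}" for x
  define L where "L = (\<Union>x. F x ` {..n})"
  have FQy: "F x ` {..n} \<subseteq> Q y" if "(x,y) \<in> R" for x y
    unfolding Q_def using that by blast
  have QR: "Q x \<subseteq> Q y" if xy: "(x,y) \<in> R" for x y
  proof
    fix w assume "w \<in> Q x"
    then obtain z where z: "(z,x) \<in> R" "w \<in> F z ` {..n}" unfolding Q_def by blast
    have "(z,y) \<in> R" using trR z(1) xy by (rule transD)
    then show "w \<in> Q y" using z(2) unfolding Q_def by blast
  qed
  have PlQ: "Pl x \<subseteq> Q y" if "(x,y) \<in> R" for x y
    unfolding Pl_def using QR[OF that] FQy[OF that] by (rule Un_least)
  have PlR: "Pl x \<subseteq> Pl y" if "(x,y) \<in> R" for x y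
    using PlQ[OF that] unfolding Pl_def[of y] by blast
  have dir: "\<exists>z\<in>J. Pl x \<subseteq> Pl z \<and> Pl y \<subseteq> Pl z" if "x \<in> J" "y \<in> J" for x y J
  proof (cases "x = y")
    case True then show ?thesis using that by blast
  next
    case False
    then have "(x,y)\<in>R \<or> (y,x)\<in>R" by (rule totR)
    then show ?thesis using PlR that by blast
  qed
  have L_eq: "L = \<Union> (Pl ` UNIV)"
  proof
    show "L \<subseteq> \<Union> (Pl ` UNIV)" unfolding L_def Pl_def by blast
    have "Q z \<subseteq> L" for z unfolding Q_def L_def by blast
    moreover have "F z ` {..n} \<subseteq> L" for z unfolding L_def by blast
    ultimately have "Pl z \<subseteq> L" for z unfolding Pl_def by (rule Un_least)
    then show "\<Union> (Pl ` UNIV) \<subseteq> L" by blast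
  qed
  have Q_eq: "Q x = \<Union> (Pl ` {z. (z,x)\<in>R})" for x
  proof
    show "Q x \<subseteq> \<Union> (Pl ` {z. (z,x)\<in>R})" unfolding Q_def Pl_def by blast
    show "\<Union> (Pl ` {z. (z,x)\<in>R}) \<subseteq> Q x"
      using PlQ by blast
  qed
  have sumL: "msum (Suc n) L = UNIV"
  proof -
    have "x \<in> msum (Suc n) L" for x
    proof -
      have "(\<Sum>i\<le>n. F x i) = x" using Fgood[of x] unfolding good_def by blast
      moreover have "(\<Sum>i<Suc n. F x i) \<in> msum (Suc n) L"
      proof (rule sum_in_msum)
        fix i assume "i < Suc n"
        then have "F x i \<in> F x ` {..n}" by simp
        then show "F x i \<in> L" unfolding L_def by blast
      qed
      ultimately show ?thesis by (simp add: lessThan_Suc_atMost)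
    qed
    then show ?thesis by blast
  qed
  have LB: "L \<inter> Bn y \<subseteq> Q y" for y
  proof
    fix l assume l: "l \<in> L \<inter> Bn y"
    then obtain x i where xi: "i \<le> n" "l = F x i" unfolding L_def by blast
    show "l \<in> Q y"
    proof (cases "(x,y) \<in> R")
      case True then show ?thesis unfolding Q_def using xi by blast
    next
      case False
      then have "y = x \<or> (y,x)\<in>R" using totR by blast
      then have "l \<in> Cs x" using BnCs l by blast
      moreover have "l \<notin> Cs x" using Fgood[of x] xi unfolding good_def by blast
      ultimately show ?thesis by blast
    qed
  qed
  have MB: "msum n L \<inter> Bn y \<subseteq> msum n (Q y)" for y
  proof
    fix s assume s: "s \<in> msum n L \<inter> Bn y"
    have md: "msum (Suc m) (\<Union>(Pl ` UNIV)) \<subseteq> (\<Union>z\<in>UNIV. msum (Suc m) (Pl z))"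
      by (rule msum_directed) (rule dir)
    from s have "s \<in> msum n L" by (rule IntD1)
    then have "s \<in> msum (Suc m) (\<Union>(Pl ` UNIV))" by (simp only: L_eq nm)
    then have "s \<in> (\<Union>z\<in>UNIV. msum (Suc m) (Pl z))" using md by (rule rev_subsetD)
    then obtain x0 where "s \<in> msum (Suc m) (Pl x0)" by blast
    then have x0: "x0 \<in> {x. s \<in> msum n (Pl x)}" using nm by simp
    obtain x where x1: "x \<in> {x. s \<in> msum n (Pl x)}" and xmin0: "\<And>z. (z,x)\<in>R \<Longrightarrow> z \<notin> {x. s \<in> msum n (Pl x)}"
      using wfE_min[OF wfR x0] by blast
    have x: "s \<in> msum n (Pl x)" using x1 by simp
    have xmin: "\<And>z. (z,x)\<in>R \<Longrightarrow> s \<notin> msum n (Pl z)" using xmin0 by simp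
    have "s \<notin> msum n (Q x)"
    proof
      assume "s \<in> msum n (Q x)"
      then have "s \<in> msum (Suc m) (\<Union>(Pl ` {z. (z,x)\<in>R}))" by (simp only: Q_eq[of x] nm)
      moreover have "msum (Suc m) (\<Union>(Pl ` {z. (z,x)\<in>R})) \<subseteq> (\<Union>z\<in>{z. (z,x)\<in>R}. msum (Suc m) (Pl z))"
        by (rule msum_directed) (rule dir)
      ultimately have "s \<in> (\<Union>z\<in>{z. (z,x)\<in>R}. msum n (Pl z))" using nm by blast
      then show False using xmin by blast
    qed
    then have "s \<notin> Cs x" using Fgood[of x] x unfolding good_def Pl_def by blast
    show "s \<in> msum n (Q y)"
    proof (cases "(x,y) \<in> R")
      case True
      then have "Pl x \<subseteq> Q y" by (rule PlQ)
      then show ?thesis using x msum_mono by blast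
    next
      case False
      then have "y = x \<or> (y,x)\<in>R" using totR by blast
      then have "s \<in> Cs x" using BnCs s by blast
      then show ?thesis using \<open>s \<notin> Cs x\<close> by blast
    qed
  qed
  have cnt: "countable (X \<inter> I)" if I: "I \<in> \<I>" and XB: "\<And>y. X \<inter> Bn y \<subseteq> msum n (Q y) \<or> X \<inter> Bn y \<subseteq> Q y" for X I
  proof -
    obtain B where B: "B \<in> sets borel" "B \<in> \<I>" "I \<subseteq> B" using si_borel[OF si I] by blast
    obtain y where "B = Bn y" using Bnsurj[OF B(1,2)] by blast
    have cm: "countable (msum n (Q y))" by (rule countable_msum[OF cQ])
    from XB[of y] have "countable (X \<inter> Bn y)"
    proof
      assume "X \<inter> Bn y \<subseteq> msum n (Q y)"
      then show ?thesis using cm by (rule countable_subset)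
    next
      assume "X \<inter> Bn y \<subseteq> Q y"
      then show ?thesis using cQ[of y] by (rule countable_subset)
    qed
    moreover have "X \<inter> I \<subseteq> X \<inter> Bn y" using B(3) \<open>B = Bn y\<close> by blast
    ultimately show ?thesis using countable_subset by blast
  qed
  have uncL: "\<not> countable L"
  proof
    assume "countable L"
    then have "countable (msum (Suc n) L)" by (rule countable_msum)
    then show False using sumL uncountable_UNIV_real by simp
  qed
  have uncM: "\<not> countable (msum n L)"
  proof
    assume cM: "countable (msum n L)"
    define a0 where "a0 = F 0 0"
    have a0: "a0 \<in> L" unfolding a0_def L_def by blast
    have "L \<subseteq> (\<lambda>s. s - real m * a0) ` msum n L"
    proof
      fix l assume "l \<in> L"
      then have "l + real m * a0 \<in> msum n L" using msum_shift_mem[OF _ a0] nm by blast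
      then show "l \<in> (\<lambda>s. s - real m * a0) ` msum n L" by force
    qed
    moreover have "countable ((\<lambda>s. s - real m * a0) ` msum n L)" using cM by (rule countable_image)
    ultimately show False using uncL countable_subset by blast
  qed
  have "luzin \<I> L"
    unfolding luzin_def using uncL ch cnt LB unfolding CH_def by blast
  moreover have "luzin \<I> (msum n L)"
    unfolding luzin_def using uncM ch cnt MB unfolding CH_def by blast
  ultimately show ?thesis using sumL by blast
qed

end
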